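(* Let $\mathcal{A}$ be a $\tau^*_{\mathrm{tup}}$-structure which is a model of $T_{\mathrm{tup}}$ whose $M$-sort is $\mathcal{M}$, and identify $\mathcal{M}^{<\mathbb{N}}$ with its image under the unique embedding into $\mathcal{A}$ that is the identity on the $M$-sort (so that $\mathcal{M}^{<\mathbb{N}}$ is expanded by the restrictions $R\restriction_{\mathbb{N}}$ and $g\restriction_{\mathbb{N}\times M^{<\mathbb{N}}}$ of the interpretations in $\mathcal{A}$). Let $\varphi$ be a $\Pi_1$ formula of $\tau^*_{\mathrm{tup}}$ and $\bar a$ a tuple from $\mathcal{M}^{<\mathbb{N}}$. If $\mathcal{A}\models\varphi(\bar a)$, then $(\mathcal{M}^{<\mathbb{N}},R\restriction_{\mathbb{N}},g\restriction_{\mathbb{N}\times M^{<\mathbb{N}}})\models\varphi(\bar a)$.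
   Context: Fix a countable language $\tau$. $\tau_{\mathrm{tup}}$ is the three-sorted language with sorts $M$ (carrying $\tau$), $N$ (carrying the language of arithmetic), and $M_{\mathrm{tup}}$, with a length function $|\cdot|:M_{\mathrm{tup}}\to N$ and a relation $\mathrm{ind}\subseteq M_{\mathrm{tup}}\times N\times M$ ("the $i$-th entry of $\pi$ is $m$"). $\tau^*_{\mathrm{tup}}=\tau_{\mathrm{tup}}\cup\{R,g\}$, $R$ a unary relation on $N$, $g:N\times M_{\mathrm{tup}}\to M$. $T_{\mathrm{tup}}$ says: the $N$-sort satisfies $PA^-$ (Peano arithmetic without induction); entries are indexed only below the length, are unique, and exist below the length; tuples with the same length and same entries are equal; an empty tuple exists; every tuple can be extended by any element of $M$ at position $|\pi|$ keeping earlier entries; and every tuple of length $\ge1$ has a truncation of length $|\pi|-1$ with the same earlier entries. $\mathcal{M}^{<\mathbb{N}}=(\mathcal{M},\mathbb{N},M^{<\mathbb{N}})$ is the standard $\tau_{\mathrm{tup}}$-structure of finite tuples from $M$. The $\Pi_1$ $\tau^*_{\mathrm{tup}}$-formulas are defined inductively: finitary quantifier-free formulas; $(\exists x\in M)\varphi$ and $(\forall x\in M)\varphi$ for $\Pi_1$ $\varphi$; $(\forall x\in N)\varphi$ and $(\forall\pi\in M_{\mathrm{tup}})\varphi$ for $\Pi_1$ $\varphi$; and $(\exists x\in N, x<t)\varphi$ and $(\exists\pi\in M_{\mathrm{tup}}, |\pi|<t)\varphi$ for $\Pi_1$ $\varphi$ and a term $t$. *)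

theory Defs
  imports "HOL-Library.Countable"
begin

text \<open>The M-sort carries a tau-structure given by interpretations of function symbols
 (type 'f) and relation symbols (type 'r) acting on argument lists; arities are given
 separately and respected by well-formed formulas.\<close>

record ('m, 'n, 't, 'f, 'r) tstruct =
  Mfun  :: "'f \<Rightarrow> 'm list \<Rightarrow> 'm"
  Mrel  :: "'r \<Rightarrow> 'm list \<Rightarrow> bool"
  Nzero :: 'n
  None' :: 'n
  Nplus :: "'n \<Rightarrow> 'n \<Rightarrow> 'n"
  Ntimes :: "'n \<Rightarrow> 'n \<Rightarrow> 'n"
  Nless :: "'n \<Rightarrow> 'n \<Rightarrow> bool"
  Tlen  :: "'t \<Rightarrow> 'n"
  Tind  :: "'t \<Rightarrow> 'n \<Rightarrow> 'm \<Rightarrow> bool"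
  Rrel  :: "'n \<Rightarrow> bool"
  Gfun  :: "'n \<Rightarrow> 't \<Rightarrow> 'm"

text \<open>Variables of each sort are indexed by natural numbers.  Tuple-sorted terms are
 just tuple variables (the language has no function symbols into M_tup).\<close>

datatype nterm =
    NVar nat | NZero | NOne | NPlus nterm nterm | NTimes nterm nterm
  | NLen nat

datatype 'f mterm =
    MVar nat | MFun 'f "'f mterm list"
  | MG nterm nat

datatype ('f, 'r) form =
    FFalse
  | MEq "'f mterm" "'f mterm"
  | NEq nterm nterm
  | TEq nat nat
  | NLessF nterm nterm
  | RelF 'r "'f mterm list"
  | IndF nat nterm "'f mterm"
  | RF nterm
  | Neg "('f, 'r) form"
  | Conj "('f, 'r) form" "('f, 'r) form"
  | Disj "('f, 'r) form" "('f, 'r) form"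
  | ExM nat "('f, 'r) form"
  | AllM nat "('f, 'r) form"
  | ExN nat "('f, 'r) form"
  | AllN nat "('f, 'r) form"
  | ExT nat "('f, 'r) form"
  | AllT nat "('f, 'r) form"
  | ExNB nat nterm "('f, 'r) form"
  | ExTB nat nterm "('f, 'r) form"

fun wf_mterm :: "('f \<Rightarrow> nat) \<Rightarrow> 'f mterm \<Rightarrow> bool" where
  "wf_mterm fa (MVar x) = True"
| "wf_mterm fa (MFun f ts) = (length ts = fa f \<and> (\<forall>t\<in>set ts. wf_mterm fa t))"
| "wf_mterm fa (MG t p) = True"

fun wf_form :: "('f \<Rightarrow> nat) \<Rightarrow> ('r \<Rightarrow> nat) \<Rightarrow> ('f, 'r) form \<Rightarrow> bool" where
  "wf_form fa ra FFalse = True"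
| "wf_form fa ra (MEq s t) = (wf_mterm fa s \<and> wf_mterm fa t)"
| "wf_form fa ra (NEq s t) = True"
| "wf_form fa ra (TEq p q) = True"
| "wf_form fa ra (NLessF s t) = True"
| "wf_form fa ra (RelF r ts) = (length ts = ra r \<and> (\<forall>t\<in>set ts. wf_mterm fa t))"
| "wf_form fa ra (IndF p s t) = wf_mterm fa t"
| "wf_form fa ra (RF s) = True"
| "wf_form fa ra (Neg \<phi>) = wf_form fa ra \<phi>"
| "wf_form fa ra (Conj \<phi> \<psi>) = (wf_form fa ra \<phi> \<and> wf_form fa ra \<psi>)"
| "wf_form fa ra (Disj \<phi> \<psi>) = (wf_form fa ra \<phi> \<and> wf_form fa ra \<psi>)"
| "wf_form fa ra (ExM x \<phi>) = wf_form fa ra \<phi>"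
| "wf_form fa ra (AllM x \<phi>) = wf_form fa ra \<phi>"
| "wf_form fa ra (ExN x \<phi>) = wf_form fa ra \<phi>"
| "wf_form fa ra (AllN x \<phi>) = wf_form fa ra \<phi>"
| "wf_form fa ra (ExT x \<phi>) = wf_form fa ra \<phi>"
| "wf_form fa ra (AllT x \<phi>) = wf_form fa ra \<phi>"
| "wf_form fa ra (ExNB x t \<phi>) = wf_form fa ra \<phi>"
| "wf_form fa ra (ExTB x t \<phi>) = wf_form fa ra \<phi>"

fun qf :: "('f, 'r) form \<Rightarrow> bool" where
  "qf (Neg \<phi>) = qf \<phi>"
| "qf (Conj \<phi> \<psi>) = (qf \<phi> \<and> qf \<psi>)"
| "qf (Disj \<phi> \<psi>) = (qf \<phi> \<and> qf \<psi>)"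
| "qf (ExM x \<phi>) = False"
| "qf (AllM x \<phi>) = False"
| "qf (ExN x \<phi>) = False"
| "qf (AllN x \<phi>) = False"
| "qf (ExT x \<phi>) = False"
| "qf (AllT x \<phi>) = False"
| "qf (ExNB x t \<phi>) = False"
| "qf (ExTB x t \<phi>) = False"
| "qf _ = True"

inductive Pi1 :: "('f, 'r) form \<Rightarrow> bool" where
  Pi1_qf: "qf \<phi> \<Longrightarrow> Pi1 \<phi>"
| Pi1_ExM: "Pi1 \<phi> \<Longrightarrow> Pi1 (ExM x \<phi>)"
| Pi1_AllM: "Pi1 \<phi> \<Longrightarrow> Pi1 (AllM x \<phi>)"
| Pi1_AllN: "Pi1 \<phi> \<Longrightarrow> Pi1 (AllN x \<phi>)"
| Pi1_AllT: "Pi1 \<phi> \<Longrightarrow> Pi1 (AllT x \<phi>)"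
| Pi1_ExNB: "Pi1 \<phi> \<Longrightarrow> Pi1 (ExNB x t \<phi>)"
| Pi1_ExTB: "Pi1 \<phi> \<Longrightarrow> Pi1 (ExTB x t \<phi>)"

fun eval_n :: "('m, 'n, 't, 'f, 'r) tstruct \<Rightarrow> (nat \<Rightarrow> 'n) \<Rightarrow> (nat \<Rightarrow> 't) \<Rightarrow> nterm \<Rightarrow> 'n" where
  "eval_n S vN vT (NVar x) = vN x"
| "eval_n S vN vT NZero = Nzero S"
| "eval_n S vN vT NOne = None' S"
| "eval_n S vN vT (NPlus s t) = Nplus S (eval_n S vN vT s) (eval_n S vN vT t)"
| "eval_n S vN vT (NTimes s t) = Ntimes S (eval_n S vN vT s) (eval_n S vN vT t)"
| "eval_n S vN vT (NLen p) = Tlen S (vT p)"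

fun eval_m :: "('m, 'n, 't, 'f, 'r) tstruct \<Rightarrow> (nat \<Rightarrow> 'm) \<Rightarrow> (nat \<Rightarrow> 'n) \<Rightarrow> (nat \<Rightarrow> 't)
    \<Rightarrow> 'f mterm \<Rightarrow> 'm" where
  "eval_m S vM vN vT (MVar x) = vM x"
| "eval_m S vM vN vT (MFun f ts) = Mfun S f (map (eval_m S vM vN vT) ts)"
| "eval_m S vM vN vT (MG t p) = Gfun S (eval_n S vN vT t) (vT p)"

fun sat :: "('m, 'n, 't, 'f, 'r) tstruct \<Rightarrow> (nat \<Rightarrow> 'm) \<Rightarrow> (nat \<Rightarrow> 'n) \<Rightarrow> (nat \<Rightarrow> 't)
    \<Rightarrow> ('f, 'r) form \<Rightarrow> bool" where
  "sat S vM vN vT FFalse = False"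
| "sat S vM vN vT (MEq s t) = (eval_m S vM vN vT s = eval_m S vM vN vT t)"
| "sat S vM vN vT (NEq s t) = (eval_n S vN vT s = eval_n S vN vT t)"
| "sat S vM vN vT (TEq p q) = (vT p = vT q)"
| "sat S vM vN vT (NLessF s t) = Nless S (eval_n S vN vT s) (eval_n S vN vT t)"
| "sat S vM vN vT (RelF r ts) = Mrel S r (map (eval_m S vM vN vT) ts)"
| "sat S vM vN vT (IndF p s t) = Tind S (vT p) (eval_n S vN vT s) (eval_m S vM vN vT t)"
| "sat S vM vN vT (RF s) = Rrel S (eval_n S vN vT s)"
| "sat S vM vN vT (Neg \<phi>) = (\<not> sat S vM vN vT \<phi>)"
| "sat S vM vN vT (Conj \<phi> \<psi>) = (sat S vM vN vT \<phi> \<and> sat S vM vN vT \<psi>)"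
| "sat S vM vN vT (Disj \<phi> \<psi>) = (sat S vM vN vT \<phi> \<or> sat S vM vN vT \<psi>)"
| "sat S vM vN vT (ExM x \<phi>) = (\<exists>a. sat S (vM(x := a)) vN vT \<phi>)"
| "sat S vM vN vT (AllM x \<phi>) = (\<forall>a. sat S (vM(x := a)) vN vT \<phi>)"
| "sat S vM vN vT (ExN x \<phi>) = (\<exists>a. sat S vM (vN(x := a)) vT \<phi>)"
| "sat S vM vN vT (AllN x \<phi>) = (\<forall>a. sat S vM (vN(x := a)) vT \<phi>)"
| "sat S vM vN vT (ExT x \<phi>) = (\<exists>a. sat S vM vN (vT(x := a)) \<phi>)"
| "sat S vM vN vT (AllT x \<phi>) = (\<forall>a. sat S vM vN (vT(x := a)) \<phi>)"
| "sat S vM vN vT (ExNB x t \<phi>) =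
     (\<exists>a. Nless S a (eval_n S vN vT t) \<and> sat S vM (vN(x := a)) vT \<phi>)"
| "sat S vM vN vT (ExTB x t \<phi>) =
     (\<exists>a. Nless S (Tlen S a) (eval_n S vN vT t) \<and> sat S vM vN (vT(x := a)) \<phi>)"

text \<open>PA^- (Kaye): the non-negative parts of discretely ordered commutative rings.\<close>
definition PA_minus :: "('m, 'n, 't, 'f, 'r) tstruct \<Rightarrow> bool" where
  "PA_minus S \<longleftrightarrow>
    (let z = Nzero S; u = None' S; p = Nplus S; m = Ntimes S; l = Nless S in
     (\<forall>x y w. p x (p y w) = p (p x y) w) \<and>
     (\<forall>x y. p x y = p y x) \<and>
     (\<forall>x y w. m x (m y w) = m (m x y) w) \<and>
     (\<forall>x y. m x y = m y x) \<and>
     (\<forall>x y w. m x (p y w) = p (m x y) (m x w)) \<and>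
     (\<forall>x. p x z = x \<and> m x z = z) \<and>
     (\<forall>x. m x u = x) \<and>
     (\<forall>x y w. l x y \<and> l y w \<longrightarrow> l x w) \<and>
     (\<forall>x. \<not> l x x) \<and>
     (\<forall>x y. l x y \<or> x = y \<or> l y x) \<and>
     (\<forall>x y w. l x y \<longrightarrow> l (p x w) (p y w)) \<and>
     (\<forall>x y w. l z w \<and> l x y \<longrightarrow> l (m x w) (m y w)) \<and>
     (\<forall>x y. l x y \<longrightarrow> (\<exists>w. p x w = y)) \<and>
     l z u \<and> (\<forall>x. l z x \<longrightarrow> (u = x \<or> l u x)) \<and>
     (\<forall>x. z = x \<or> l z x))"

definition T_tup :: "('m, 'n, 't, 'f, 'r) tstruct \<Rightarrow> bool" where
  "T_tup S \<longleftrightarrow> PA_minus S \<and>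
    \<comment> \<open>entries are indexed only below the length\<close>
    (\<forall>\<pi> i m. Tind S \<pi> i m \<longrightarrow> Nless S i (Tlen S \<pi>)) \<and>
    \<comment> \<open>entries are unique\<close>
    (\<forall>\<pi> i m m'. Tind S \<pi> i m \<and> Tind S \<pi> i m' \<longrightarrow> m = m') \<and>
    \<comment> \<open>entries exist below the length\<close>
    (\<forall>\<pi> i. Nless S i (Tlen S \<pi>) \<longrightarrow> (\<exists>m. Tind S \<pi> i m)) \<and>
    \<comment> \<open>extensionality\<close>
    (\<forall>\<pi> \<pi>'. Tlen S \<pi> = Tlen S \<pi>' \<and> (\<forall>i m. Tind S \<pi> i m \<longleftrightarrow> Tind S \<pi>' i m) \<longrightarrow> \<pi> = \<pi>') \<and>
    \<comment> \<open>an empty tuple exists\<close>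
    (\<exists>\<pi>. Tlen S \<pi> = Nzero S) \<and>
    \<comment> \<open>extension by any element at position |pi|\<close>
    (\<forall>\<pi> m. \<exists>\<pi>'. Tlen S \<pi>' = Nplus S (Tlen S \<pi>) (None' S) \<and> Tind S \<pi>' (Tlen S \<pi>) m \<and>
        (\<forall>i x. Nless S i (Tlen S \<pi>) \<longrightarrow> (Tind S \<pi>' i x \<longleftrightarrow> Tind S \<pi> i x))) \<and>
    \<comment> \<open>truncation of tuples of length at least 1\<close>
    (\<forall>\<pi>. Nless S (Nzero S) (Tlen S \<pi>) \<longrightarrow>
        (\<exists>\<pi>'. Nplus S (Tlen S \<pi>') (None' S) = Tlen S \<pi> \<and>
           (\<forall>i x. Nless S i (Tlen S \<pi>') \<longrightarrow> (Tind S \<pi>' i x \<longleftrightarrow> Tind S \<pi> i x))))"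

text \<open>An embedding of the standard tau_tup-structure M^{<N} (with the same M-sort) into S
 which is the identity on the M-sort.\<close>
definition is_std_emb :: "('m, 'n, 't, 'f, 'r) tstruct \<Rightarrow> (nat \<Rightarrow> 'n) \<Rightarrow> ('m list \<Rightarrow> 't) \<Rightarrow> bool" where
  "is_std_emb S eN eT \<longleftrightarrow> inj eN \<and> inj eT \<and>
    eN 0 = Nzero S \<and> eN 1 = None' S \<and>
    (\<forall>a b. eN (a + b) = Nplus S (eN a) (eN b)) \<and>
    (\<forall>a b. eN (a * b) = Ntimes S (eN a) (eN b)) \<and>
    (\<forall>a b. a < b \<longleftrightarrow> Nless S (eN a) (eN b)) \<and>
    (\<forall>\<pi>. Tlen S (eT \<pi>) = eN (length \<pi>)) \<and>
    (\<forall>\<pi> i m. Tind S (eT \<pi>) (eN i) m \<longleftrightarrow> (i < length \<pi> \<and> \<pi> ! i = m))"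

definition std_exp :: "('m, 'n, 't, 'f, 'r) tstruct \<Rightarrow> (nat \<Rightarrow> 'n) \<Rightarrow> ('m list \<Rightarrow> 't)
    \<Rightarrow> ('m, nat, 'm list, 'f, 'r) tstruct" where
  "std_exp S eN eT =
    \<lparr> Mfun = Mfun S, Mrel = Mrel S,
      Nzero = 0, None' = 1, Nplus = (+), Ntimes = (*), Nless = (<),
      Tlen = length, Tind = (\<lambda>\<pi> i m. i < length \<pi> \<and> \<pi> ! i = m),
      Rrel = (\<lambda>i. Rrel S (eN i)),
      Gfun = (\<lambda>i \<pi>. Gfun S (eN i) (eT \<pi>)) \<rparr>"

end

theory Submission
  imports Defs
begin

lemma PA_facts:
  assumes "PA_minus S"
  shows pa_trans: "\<And>x y w. Nless S x y \<Longrightarrow> Nless S y w \<Longrightarrow> Nless S x w"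
    and pa_irr: "\<And>x. \<not> Nless S x x"
    and pa_tri: "\<And>x y. Nless S x y \<or> x = y \<or> Nless S y x"
    and pa_mono: "\<And>x y w. Nless S x y \<Longrightarrow> Nless S (Nplus S x w) (Nplus S y w)"
    and pa_diff: "\<And>x y. Nless S x y \<Longrightarrow> \<exists>w. Nplus S x w = y"
    and pa_disc: "\<And>x. Nless S (Nzero S) x \<Longrightarrow> None' S = x \<or> Nless S (None' S) x"
    and pa_pos: "\<And>x. Nzero S = x \<or> Nless S (Nzero S) x"
    and pa_add0: "\<And>x. Nplus S x (Nzero S) = x"
    and pa_comm: "\<And>x y. Nplus S x y = Nplus S y x"
  using assms unfolding PA_minus_def Let_def by meson+

lemma emb_arith:
  assumes E: "is_std_emb A eN eT"
  shows "eN 0 = Nzero A" "eN (Suc n) = Nplus A (eN n) (None' A)"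
proof -
  show "eN 0 = Nzero A" using E unfolding is_std_emb_def by blast
  have "eN (n + 1) = Nplus A (eN n) (eN 1)" using E unfolding is_std_emb_def by blast
  moreover have "eN 1 = None' A" using E unfolding is_std_emb_def by blast
  ultimately show "eN (Suc n) = Nplus A (eN n) (None' A)" by simp
qed

lemma below_std:
  assumes T: "T_tup A" and E: "is_std_emb A eN eT"
  shows "Nless A x (eN n) \<Longrightarrow> \<exists>k<n. x = eN k"
proof (induction n arbitrary: x)
  case 0
  have P: "PA_minus A" using T by (simp add: T_tup_def)
  have h: "Nless A x (Nzero A)" using 0 emb_arith(1)[OF E] by simp
  have "Nzero A = x \<or> Nless A (Nzero A) x" by (rule pa_pos[OF P])
  then have "Nless A x x"
  proof
    assume "Nzero A = x" then show ?thesis using h by simp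
  next
    assume "Nless A (Nzero A) x" then show ?thesis using h pa_trans[OF P] by blast
  qed
  then show ?case using pa_irr[OF P] by blast
next
  case (Suc n)
  have P: "PA_minus A" using T by (simp add: T_tup_def)
  have e1: "eN (Suc n) = Nplus A (eN n) (None' A)" by (rule emb_arith(2)[OF E])
  have "Nless A x (eN n) \<or> x = eN n \<or> Nless A (eN n) x" by (rule pa_tri[OF P])
  moreover
  { assume "Nless A x (eN n)"
    then obtain k where "k < n" "x = eN k" using Suc.IH by blast
    then have ?case using less_SucI by blast }
  moreover
  { assume "x = eN n" then have ?case by blast }
  moreover
  { assume 3: "Nless A (eN n) x"
    then obtain w where w: "Nplus A (eN n) w = x" using pa_diff[OF P] by blast
    have False
    proof (cases "w = Nzero A")
      case True
      then have "x = eN n" using w pa_add0[OF P] by simp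
      then show False using 3 pa_irr[OF P] by simp
    next
      case False
      then have "Nless A (Nzero A) w" using pa_pos[OF P, of w] by simp
      then have "None' A = w \<or> Nless A (None' A) w" by (rule pa_disc[OF P])
      then show False
      proof
        assume "None' A = w" then have "x = eN (Suc n)" using w e1 by simp
        then show False using Suc.prems pa_irr[OF P] by simp
      next
        assume h: "Nless A (None' A) w"
        have "Nless A (Nplus A (None' A) (eN n)) (Nplus A w (eN n))"
          using h by (rule pa_mono[OF P])
        then have "Nless A (eN (Suc n)) x" using w e1 pa_comm[OF P] by simp
        then have "Nless A x x" using Suc.prems pa_trans[OF P] by blast
        then show False using pa_irr[OF P] by simp
      qed
    qed
    then have ?case by blast }
  ultimately show ?case by blast
qed

lemma emb_facts:
  assumes E: "is_std_emb A eN eT"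
  shows "inj eN" "inj eT" "\<And>a b. Nless A (eN a) (eN b) \<longleftrightarrow> a < b"
    "\<And>\<pi>. Tlen A (eT \<pi>) = eN (length \<pi>)"
    "\<And>\<pi> i m. Tind A (eT \<pi>) (eN i) m \<longleftrightarrow> (i < length \<pi> \<and> \<pi> ! i = m)"
  using E unfolding is_std_emb_def by auto

lemma T_facts:
  assumes "T_tup S"
  shows t_below: "\<And>\<pi> i m. Tind S \<pi> i m \<Longrightarrow> Nless S i (Tlen S \<pi>)"
    and t_uniq: "\<And>\<pi> i m m'. Tind S \<pi> i m \<Longrightarrow> Tind S \<pi> i m' \<Longrightarrow> m = m'"
    and t_ex: "\<And>\<pi> i. Nless S i (Tlen S \<pi>) \<Longrightarrow> \<exists>m. Tind S \<pi> i m"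
    and t_ext: "\<And>\<pi> \<pi>'. Tlen S \<pi> = Tlen S \<pi>' \<Longrightarrow> (\<And>i m. Tind S \<pi> i m \<longleftrightarrow> Tind S \<pi>' i m) \<Longrightarrow> \<pi> = \<pi>'"
proof -
  note X = assms[unfolded T_tup_def]
  note B = conjunct1[OF conjunct2[OF X]]
  note U = conjunct1[OF conjunct2[OF conjunct2[OF X]]]
  note EX = conjunct1[OF conjunct2[OF conjunct2[OF conjunct2[OF X]]]]
  note XT = conjunct1[OF conjunct2[OF conjunct2[OF conjunct2[OF conjunct2[OF X]]]]]
  show "\<And>\<pi> i m. Tind S \<pi> i m \<Longrightarrow> Nless S i (Tlen S \<pi>)" using B by blast
  show "\<And>\<pi> i m m'. Tind S \<pi> i m \<Longrightarrow> Tind S \<pi> i m' \<Longrightarrow> m = m'" using U by blast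
  show "\<And>\<pi> i. Nless S i (Tlen S \<pi>) \<Longrightarrow> \<exists>m. Tind S \<pi> i m" using EX by blast
  show "\<And>\<pi> \<pi>'. Tlen S \<pi> = Tlen S \<pi>' \<Longrightarrow> (\<And>i m. Tind S \<pi> i m \<longleftrightarrow> Tind S \<pi>' i m) \<Longrightarrow> \<pi> = \<pi>'"
  proof -
    fix \<pi> \<pi>' assume "Tlen S \<pi> = Tlen S \<pi>'" "\<And>i m. Tind S \<pi> i m \<longleftrightarrow> Tind S \<pi>' i m"
    then show "\<pi> = \<pi>'" using XT by blast
  qed
qed

lemma tup_std:
  assumes T: "T_tup A" and E: "is_std_emb A eN eT"
    and L: "Tlen A a = eN k"
  shows "\<exists>p. a = eT p"
proof -
  have ent: "\<forall>j<k. \<exists>m. Tind A a (eN j) m"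
  proof (intro allI impI)
    fix j assume "j < k"
    then have "Nless A (eN j) (eN k)" using emb_facts(3)[OF E] by blast
    then show "\<exists>m. Tind A a (eN j) m" using t_ex[OF T, of "eN j" a] L by simp
  qed
  define p where "p = map (\<lambda>j. SOME m. Tind A a (eN j) m) [0..<k]"
  have lp: "length p = k" by (simp add: p_def)
  have pj: "Tind A a (eN j) (p ! j)" if j: "j < k" for j
  proof -
    have "p ! j = (SOME m. Tind A a (eN j) m)" using j by (simp add: p_def)
    moreover have "\<exists>m. Tind A a (eN j) m" using ent j by blast
    ultimately show ?thesis by (metis someI_ex)
  qed
  have lenE: "Tlen A (eT p) = eN k" using emb_facts(4)[OF E] lp by simp
  have iff: "Tind A a i m \<longleftrightarrow> Tind A (eT p) i m" for i m
  proof
    assume h: "Tind A a i m"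
    then have "Nless A i (eN k)" using t_below[OF T h] L by simp
    then obtain j where j: "j < k" "i = eN j" using below_std[OF T E] by blast
    have h': "Tind A a (eN j) m" using h j(2) by simp
    have "m = p ! j" using t_uniq[OF T h' pj[OF j(1)]] .
    then show "Tind A (eT p) i m" using emb_facts(5)[OF E] j lp by simp
  next
    assume h: "Tind A (eT p) i m"
    then have "Nless A i (eN k)" using t_below[OF T h] lenE by simp
    then obtain j where j: "j < k" "i = eN j" using below_std[OF T E] by blast
    then have "m = p ! j" using h emb_facts(5)[OF E] lp by simp
    then show "Tind A a i m" using j pj by simp
  qed
  have "a = eT p" using L lenE iff by (intro t_ext[OF T]) simp_all
  then show ?thesis ..
qed

lemma eval_n_std:
  assumes E: "is_std_emb A eN eT"
  shows "eval_n A (eN \<circ> vN) (eT \<circ> vT) t = eN (eval_n (std_exp A eN eT) vN vT t)"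
  using E by (induction t) (auto simp: is_std_emb_def std_exp_def)

lemma eval_n_std':
  assumes E: "is_std_emb A eN eT"
  shows "eval_n A (\<lambda>a. eN (vN a)) (\<lambda>a. eT (vT a)) t = eN (eval_n (std_exp A eN eT) vN vT t)"
  using eval_n_std[OF E, of vN vT t] unfolding comp_def .

lemma eval_m_std:
  assumes E: "is_std_emb A eN eT"
  shows "eval_m A vM (eN \<circ> vN) (eT \<circ> vT) t = eval_m (std_exp A eN eT) vM vN vT t"
proof (induction t)
  case (MVar x) then show ?case by simp
next
  case (MFun f ts) then show ?case by (simp add: std_exp_def cong: map_cong)
next
  case (MG t p) then show ?case using eval_n_std'[OF E] by (simp add: std_exp_def)
qed

lemma std_fields:
  "Mfun (std_exp A eN eT) = Mfun A" "Mrel (std_exp A eN eT) = Mrel A"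
  "Nless (std_exp A eN eT) = (<)" "Tlen (std_exp A eN eT) = length"
  "Tind (std_exp A eN eT) = (\<lambda>\<pi> i m. i < length \<pi> \<and> \<pi> ! i = m)"
  "Rrel (std_exp A eN eT) = (\<lambda>i. Rrel A (eN i))"
  by (simp_all add: std_exp_def)

lemma qf_std:
  assumes E: "is_std_emb A eN eT" and "qf \<phi>"
  shows "sat A vM (\<lambda>a. eN (vN a)) (\<lambda>a. eT (vT a)) \<phi> \<longleftrightarrow> sat (std_exp A eN eT) vM vN vT \<phi>"
  using assms(2)
proof (induction \<phi>)
  case (MEq s t) then show ?case using eval_m_std[OF E, of vM vN vT] unfolding comp_def by simp
next
  case (NEq s t)
  then show ?case using eval_n_std'[OF E] emb_facts(1)[OF E] by (simp add: inj_eq)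
next
  case (TEq p q)
  then show ?case using emb_facts(2)[OF E] by (simp add: inj_eq)
next
  case (NLessF s t) then show ?case using eval_n_std'[OF E] emb_facts(3)[OF E]
    by (simp add: std_fields)
next
  case (RelF r ts)
  have "map (eval_m A vM (\<lambda>a. eN (vN a)) (\<lambda>a. eT (vT a))) ts = map (eval_m (std_exp A eN eT) vM vN vT) ts"
    using eval_m_std[OF E, of vM vN vT] unfolding comp_def by (intro map_cong) auto
  then show ?case by (metis sat.simps(6) std_fields(2))
next
  case (IndF p s t) then show ?case using eval_n_std'[OF E] eval_m_std[OF E, of vM vN vT] emb_facts(5)[OF E]
    unfolding comp_def by (simp add: std_fields)
next
  case (RF s) then show ?case using eval_n_std'[OF E] by (simp add: std_fields)
qed auto

lemma pi1_std:
  assumes T: "T_tup A" and E: "is_std_emb A eN eT" and P: "Pi1 \<phi>"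
  shows "sat A vM (\<lambda>a. eN (vN a)) (\<lambda>a. eT (vT a)) \<phi> \<Longrightarrow> sat (std_exp A eN eT) vM vN vT \<phi>"
  using P
proof (induction \<phi> arbitrary: vM vN vT rule: Pi1.induct)
  case (Pi1_qf \<phi>) then show ?case using qf_std[OF E] by blast
next
  case (Pi1_ExM \<phi> x) then show ?case by auto
next
  case (Pi1_AllM \<phi> x) then show ?case by auto
next
  case (Pi1_AllN \<phi> x)
  show ?case
  proof (simp only: sat.simps, intro allI)
    fix a
    have "sat A vM ((\<lambda>b. eN (vN b))(x := eN a)) (\<lambda>a. eT (vT a)) \<phi>" using Pi1_AllN.prems[unfolded sat.simps] by blast
    moreover have "(\<lambda>b. eN (vN b))(x := eN a) = (\<lambda>b. eN ((vN(x:=a)) b))" by auto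
    ultimately show "sat (std_exp A eN eT) vM (vN(x := a)) vT \<phi>"
      using Pi1_AllN.IH by metis
  qed
next
  case (Pi1_AllT \<phi> x)
  show ?case
  proof (simp only: sat.simps, intro allI)
    fix a
    have "sat A vM (\<lambda>b. eN (vN b)) ((\<lambda>b. eT (vT b))(x := eT a)) \<phi>" using Pi1_AllT.prems[unfolded sat.simps] by blast
    moreover have "(\<lambda>b. eT (vT b))(x := eT a) = (\<lambda>b. eT ((vT(x:=a)) b))" by auto
    ultimately show "sat (std_exp A eN eT) vM vN (vT(x := a)) \<phi>"
      using Pi1_AllT.IH by metis
  qed
next
  case (Pi1_ExNB \<phi> x t)
  obtain a where a: "Nless A a (eN (eval_n (std_exp A eN eT) vN vT t))"
    "sat A vM ((\<lambda>b. eN (vN b))(x := a)) (\<lambda>b. eT (vT b)) \<phi>"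
    using Pi1_ExNB.prems[unfolded sat.simps] eval_n_std'[OF E] by metis
  obtain k where k: "k < eval_n (std_exp A eN eT) vN vT t" "a = eN k"
    using below_std[OF T E a(1)] by blast
  have "(\<lambda>b. eN (vN b))(x := a) = (\<lambda>b. eN ((vN(x:=k)) b))" using k(2) by auto
  then have "sat (std_exp A eN eT) vM (vN(x := k)) vT \<phi>"
    using Pi1_ExNB.IH a(2) by metis
  then show ?case using k(1) by (auto simp: std_fields)
next
  case (Pi1_ExTB \<phi> x t)
  obtain a where a: "Nless A (Tlen A a) (eN (eval_n (std_exp A eN eT) vN vT t))"
    "sat A vM (\<lambda>b. eN (vN b)) ((\<lambda>b. eT (vT b))(x := a)) \<phi>"
    using Pi1_ExTB.prems[unfolded sat.simps] eval_n_std'[OF E] by metis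
  obtain k where k: "k < eval_n (std_exp A eN eT) vN vT t" "Tlen A a = eN k"
    using below_std[OF T E a(1)] by blast
  obtain p where p: "a = eT p" using tup_std[OF T E k(2)] by blast
  have lp: "length p = k" using k(2) p emb_facts(1,4)[OF E] by (simp add: inj_eq)
  have "(\<lambda>b. eT (vT b))(x := a) = (\<lambda>b. eT ((vT(x:=p)) b))" using p by auto
  then have "sat (std_exp A eN eT) vM vN (vT(x := p)) \<phi>"
    using Pi1_ExTB.IH a(2) by metis
  then show ?case using k(1) lp by (auto simp: std_fields)
qed

theorem lemma5p7:
  fixes A :: "('m, 'n, 't, 'f :: countable, 'r :: countable) tstruct"
    and fa :: "'f \<Rightarrow> nat" and ra :: "'r \<Rightarrow> nat"
    and eN :: "nat \<Rightarrow> 'n" and eT :: "'m list \<Rightarrow> 't"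
    and \<phi> :: "('f, 'r) form"
    and vM :: "nat \<Rightarrow> 'm" and vN :: "nat \<Rightarrow> nat" and vT :: "nat \<Rightarrow> 'm list"
  assumes "T_tup A"
    and "is_std_emb A eN eT"
    and "wf_form fa ra \<phi>"
    and "Pi1 \<phi>"
    and "sat A vM (eN \<circ> vN) (eT \<circ> vT) \<phi>"
  shows "sat (std_exp A eN eT) vM vN vT \<phi>"
  using pi1_std[OF assms(1,2,4)] assms(5) unfolding comp_def by blast

end
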